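(* Assume (A) or (B), with $\alpha=a$ in case (A) and $\alpha=b$ in case (B). Let $1<q\le\infty$ and $q\le r\le\infty$. There is a constant $c_2>0$ depending only on $q,n,\alpha$, bounded for $q\in(1+\varepsilon,\infty]$ for each fixed $\varepsilon>0$, such that for every $\varphi\in L^{q,\infty}(w)$ and $t>0$, $$\|S(t)\varphi w\|_{L^{r,\infty}(w)}\le c_2\,t^{-\frac{n+\alpha}{2}\left(\frac1q-\frac1r\right)}\|\varphi\|_{L^{q,\infty}(w)}.$$
   Context: (A): $w(x)=|x_1|^a$ on $\mathbb{R}^n$ with $a\in[0,1)$; (B): $w(x)=|x|^b$ with $b\in[0,n)$. $\Gamma$ is the fundamental solution of $\partial_t v-w^{-1}\operatorname{div}(w\nabla v)=0$ with pole at $(y,0)$, assumed to satisfy (K1) $\int\Gamma(x,y,t)w(x)dx=\int\Gamma(x,y,t)w(y)dy=1$; (K2) $\Gamma(x,y,t)=\int\Gamma(x,\xi,t-s)\Gamma(\xi,y,s)w(\xi)d\xi$ for $t>s>0$; (K3) $c_*e^{-|x-y|^2/(c_*t)}\le \sqrt{w(B(x,\sqrt t))w(B(y,\sqrt t))}\,\Gamma(x,y,t)\le C_*e^{-|x-y|^2/(C_*t)}$, $w(E)=\int_Ew$. $[S(t)\varphi w](x):=\int\Gamma(x,y,t)\varphi(y)w(y)\,dy$. $\mu_f(\lambda)=w(\{|f|>\lambda\})$, $f^*(s)=\inf\{\lambda>0:\mu_f(\lambda)\le s\}$, $\|f\|_{L^{r,\infty}(w)}=\sup_{s>0}s^{1/r}f^*(s)$,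 $L^{\infty,\infty}(w)=L^\infty$. *)

theory Defs
  imports "HOL-Analysis.Analysis"
begin

text \<open>Real power with the convention 0 to the power 0 equal to 1 (Isabelle's powr gives 0 there).\<close>
definition rpow :: "real \<Rightarrow> real \<Rightarrow> real" where
  "rpow x p = (if x = 0 then (if p = 0 then 1 else 0) else x powr p)"

text \<open>Weight (A): w(x) = |x_i|^a (coordinate i plays the role of x_1).\<close>
definition wA :: "'n::finite \<Rightarrow> real \<Rightarrow> real^'n \<Rightarrow> real" where
  "wA i a x = rpow \<bar>x $ i\<bar> a"

definition wB :: "real \<Rightarrow> real^'n::finite \<Rightarrow> real" where
  "wB b x = rpow (norm x) b"

definition wmeasure :: "(real^'n::finite \<Rightarrow> real) \<Rightarrow> (real^'n) measure" where
  "wmeasure w = density lborel (\<lambda>x. ennreal (w x))"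

definition wvol :: "(real^'n::finite \<Rightarrow> real) \<Rightarrow> (real^'n) set \<Rightarrow> real" where
  "wvol w E = measure (wmeasure w) E"

definition distf :: "(real^'n::finite \<Rightarrow> real) \<Rightarrow> (real^'n \<Rightarrow> real) \<Rightarrow> real \<Rightarrow> ennreal" where
  "distf w f lam = emeasure (wmeasure w) {x. lam < \<bar>f x\<bar>}"

text \<open>Decreasing rearrangement f^*(s) = inf {lambda > 0. mu_f(lambda) <= s} (inf of empty set = infinity).\<close>
definition rearr :: "(real^'n::finite \<Rightarrow> real) \<Rightarrow> (real^'n \<Rightarrow> real) \<Rightarrow> real \<Rightarrow> ennreal" where
  "rearr w f s = (INF lam\<in>{lam::real. 0 < lam \<and> distf w f lam \<le> ennreal s}. ennreal lam)"

definition einv :: "ereal \<Rightarrow> real" where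
  "einv r = (if r = \<infinity> then 0 else 1 / real_of_ereal r)"

text \<open>Weak Lorentz quasi-norm ||f||_{L^{r,infinity}(w)} = sup_{s>0} s^{1/r} f^*(s).
  For r = infinity this is sup_{s>0} f^*(s), the essential supremum of |f|.\<close>
definition wlnorm :: "(real^'n::finite \<Rightarrow> real) \<Rightarrow> ereal \<Rightarrow> (real^'n \<Rightarrow> real) \<Rightarrow> ennreal" where
  "wlnorm w r f = (SUP s\<in>{0<..}. ennreal (s powr einv r) * rearr w f s)"

definition Sop :: "(real^'n::finite \<Rightarrow> real) \<Rightarrow> (real^'n \<Rightarrow> real^'n \<Rightarrow> real \<Rightarrow> real)
    \<Rightarrow> real \<Rightarrow> (real^'n \<Rightarrow> real) \<Rightarrow> real^'n \<Rightarrow> real" where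
  "Sop w \<Gamma> t \<phi> x = (LINT y|lborel. \<Gamma> x y t * \<phi> y * w y)"

definition kernel_ok :: "(real^'n::finite \<Rightarrow> real) \<Rightarrow> real \<Rightarrow> real \<Rightarrow>
    (real^'n \<Rightarrow> real^'n \<Rightarrow> real \<Rightarrow> real) \<Rightarrow> bool" where
  "kernel_ok w cs Cs \<Gamma> \<longleftrightarrow>
     (\<forall>t>0. (\<lambda>(x,y). \<Gamma> x y t) \<in> borel_measurable borel) \<and>
     (\<forall>t>0. \<forall>y. (LINT x|lborel. \<Gamma> x y t * w x) = 1) \<and>
     (\<forall>t>0. \<forall>x. (LINT y|lborel. \<Gamma> x y t * w y) = 1) \<and>
     (\<forall>t s x y. 0 < s \<and> s < t \<longrightarrow>
        \<Gamma> x y t = (LINT \<xi>|lborel. \<Gamma> x \<xi> (t - s) * \<Gamma> \<xi> y s * w \<xi>)) \<and>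
     (\<forall>x y t. 0 < t \<longrightarrow>
        cs * exp (- (dist x y)\<^sup>2 / (cs * t))
          \<le> sqrt (wvol w (ball x (sqrt t)) * wvol w (ball y (sqrt t))) * \<Gamma> x y t \<and>
        sqrt (wvol w (ball x (sqrt t)) * wvol w (ball y (sqrt t))) * \<Gamma> x y t
          \<le> Cs * exp (- (dist x y)\<^sup>2 / (Cs * t)))"

end

theory Submission
  imports Defs
begin


lemma rpow_nonneg: "0 \<le> x \<Longrightarrow> 0 \<le> rpow x p"
  by (simp add: rpow_def)

lemma rpow_meas[measurable]: "(\<lambda>x. rpow x p) \<in> borel_measurable borel"
  unfolding rpow_def by measurable

lemma rpow_lower: "0 \<le> p \<Longrightarrow> 0 < u \<Longrightarrow> u \<le> x \<Longrightarrow> u powr p \<le> rpow x p"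
  by (auto simp: rpow_def powr_mono2)

lemma rpow_upper: "0 \<le> p \<Longrightarrow> 0 \<le> x \<Longrightarrow> x \<le> R \<Longrightarrow> rpow x p \<le> 1 + R powr p"
  by (auto simp: rpow_def intro: order.trans[OF powr_mono2[of p x R]])

lemma vol_lower:
  fixes g :: "real^'n::finite \<Rightarrow> real"
  assumes gnn: "\<And>y. 0 \<le> g y" and lip: "\<And>y z. g z \<le> g y + dist y z"
    and gm: "g \<in> borel_measurable borel"
    and zpt: "\<And>x \<rho>. 0 < \<rho> \<Longrightarrow> \<exists>z. dist x z \<le> \<rho>/2 \<and> \<rho>/2 \<le> g z"
    and al: "0 \<le> \<alpha>" and \<rho>: "0 < \<rho>"
  shows "(\<rho>/4) powr \<alpha> * measure lborel (ball (0::real^'n) (\<rho>/4)) \<le> wvol (\<lambda>y. rpow (g y) \<alpha>) (ball x \<rho>)"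
proof -
  define w where "w = (\<lambda>y. rpow (g y) \<alpha>)"
  have wm[measurable]: "w \<in> borel_measurable borel" unfolding w_def using gm by measurable
  obtain z where z: "dist x z \<le> \<rho>/2" "\<rho>/2 \<le> g z" using zpt[OF \<rho>] by blast
  have sub: "ball z (\<rho>/4) \<subseteq> ball x \<rho>"
  proof
    fix y assume "y \<in> ball z (\<rho>/4)"
    then have "dist z y < \<rho>/4" by simp
    moreover have "dist x y \<le> dist x z + dist z y" by (rule dist_triangle)
    ultimately show "y \<in> ball x \<rho>" using z(1) \<rho> by simp
  qed
  have gb: "\<rho>/4 \<le> g y" if "y \<in> ball z (\<rho>/4)" for y
    using lip[of z y] z(2) that by (auto simp: dist_commute)
  have "emeasure (wmeasure w) (ball x \<rho>) = (\<integral>\<^sup>+ y. ennreal (w y) * indicator (ball x \<rho>) y \<partial>lborel)"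
    unfolding wmeasure_def by (subst emeasure_density) auto
  also have "\<dots> \<ge> (\<integral>\<^sup>+ y. ennreal ((\<rho>/4) powr \<alpha>) * indicator (ball z (\<rho>/4)) y \<partial>lborel)"
  proof (rule nn_integral_mono)
    fix y show "ennreal ((\<rho>/4) powr \<alpha>) * indicator (ball z (\<rho>/4)) y \<le> ennreal (w y) * indicator (ball x \<rho>) y"
    proof (cases "y \<in> ball z (\<rho>/4)")
      case True
      then have "(\<rho>/4) powr \<alpha> \<le> w y" unfolding w_def using gb[OF True] al \<rho> by (intro rpow_lower) auto
      moreover have "y \<in> ball x \<rho>" using True sub by auto
      ultimately show ?thesis using True by (auto intro: ennreal_leI)
    qed auto
  qed
  finally have lo: "ennreal ((\<rho>/4) powr \<alpha>) * emeasure lborel (ball z (\<rho>/4)) \<le> emeasure (wmeasure w) (ball x \<rho>)"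
    by (subst (asm) nn_integral_cmult_indicator) auto
  define R where "R = g x + \<rho>"
  have "emeasure (wmeasure w) (ball x \<rho>) = (\<integral>\<^sup>+ y. ennreal (w y) * indicator (ball x \<rho>) y \<partial>lborel)"
    unfolding wmeasure_def by (subst emeasure_density) auto
  also have "\<dots> \<le> (\<integral>\<^sup>+ y. ennreal (1 + R powr \<alpha>) * indicator (ball x \<rho>) y \<partial>lborel)"
  proof (rule nn_integral_mono)
    fix y show "ennreal (w y) * indicator (ball x \<rho>) y \<le> ennreal (1 + R powr \<alpha>) * indicator (ball x \<rho>) y"
    proof (cases "y \<in> ball x \<rho>")
      case True
      then have "w y \<le> 1 + R powr \<alpha>" unfolding w_def R_def using lip[of y x] al gnn[of y]
        by (intro rpow_upper) (auto simp: dist_commute)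
      then have "ennreal (w y) \<le> ennreal (1 + R powr \<alpha>)" by (rule ennreal_leI)
      then show ?thesis using True by (simp del: ennreal_plus)
    qed auto
  qed
  also have "\<dots> = ennreal (1 + R powr \<alpha>) * emeasure lborel (ball x \<rho>)"
    by (subst nn_integral_cmult_indicator) auto
  also have "\<dots> < \<infinity>" using emeasure_lborel_ball_finite[of x \<rho>]
    by (simp add: ennreal_mult_less_top)
  finally have fin: "emeasure (wmeasure w) (ball x \<rho>) < \<infinity>" .
  have "emeasure lborel (ball z (\<rho>/4)) = ennreal (measure lborel (ball z (\<rho>/4)))"
    by (intro emeasure_eq_ennreal_measure) (use emeasure_lborel_ball_finite[of z "\<rho>/4"] in simp)
  moreover have "measure lborel (ball z (\<rho>/4)) = measure lborel (ball (0::real^'n) (\<rho>/4))"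
    using \<rho> content_ball_conv_unit_ball[of "\<rho>/4" z] content_ball_conv_unit_ball[of "\<rho>/4" "0::real^'n"] by simp
  ultimately have lo2: "ennreal ((\<rho>/4) powr \<alpha> * measure lborel (ball (0::real^'n) (\<rho>/4))) \<le> emeasure (wmeasure w) (ball x \<rho>)"
    using lo by (simp add: ennreal_mult)
  show ?thesis unfolding wvol_def w_def[symmetric] measure_def[of "wmeasure w"]
  proof -
    have "enn2real (ennreal ((\<rho>/4) powr \<alpha> * measure lborel (ball (0::real^'n) (\<rho>/4)))) \<le> enn2real (emeasure (wmeasure w) (ball x \<rho>))"
      using lo2 fin by (intro enn2real_mono) auto
    then show "(\<rho>/4) powr \<alpha> * measure lborel (ball (0::real^'n) (\<rho>/4)) \<le> enn2real (emeasure (wmeasure w) (ball x \<rho>))"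
      by simp
  qed
qed



lemma weight_props:
  fixes w :: "real^'n::finite \<Rightarrow> real" and \<alpha> :: real
  assumes weight: "(\<exists>i a. 0 \<le> a \<and> a < 1 \<and> w = wA i a \<and> \<alpha> = a) \<or>
                   (\<exists>b. 0 \<le> b \<and> b < real CARD('n) \<and> w = wB b \<and> \<alpha> = b)"
  shows "0 \<le> \<alpha> \<and> (\<forall>x. 0 \<le> w x) \<and> w \<in> borel_measurable borel \<and>
    (\<exists>c0>0. \<forall>x \<rho>. 0 < \<rho> \<longrightarrow> c0 * \<rho> powr (real CARD('n) + \<alpha>) \<le> wvol w (ball x \<rho>))"
proof -
  obtain g where gnn: "\<And>y. 0 \<le> g y" and lip: "\<And>y z. g z \<le> g y + dist y z"
    and gm: "g \<in> borel_measurable borel"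
    and zpt: "\<And>x \<rho>. 0 < \<rho> \<Longrightarrow> \<exists>z. dist x z \<le> \<rho>/2 \<and> \<rho>/2 \<le> g z"
    and al: "0 \<le> \<alpha>" and weq: "w = (\<lambda>y. rpow (g y) \<alpha>)"
  proof (cases "\<exists>i a. 0 \<le> a \<and> a < 1 \<and> w = wA i a \<and> \<alpha> = a")
    case True
    then obtain i where i: "w = wA i \<alpha>" "0 \<le> \<alpha>" by blast
    show ?thesis
    proof (rule that[of "\<lambda>y. \<bar>y $ i\<bar>"])
      show "\<bar>z $ i\<bar> \<le> \<bar>y $ i\<bar> + dist y z" for y z
        using component_le_norm_cart[of "z - y" i] by (simp add: dist_norm norm_minus_commute)
      show "\<exists>z. dist x z \<le> \<rho>/2 \<and> \<rho>/2 \<le> \<bar>z $ i\<bar>" if "0 < \<rho>" for x \<rho>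
      proof -
        define c where "c = (if 0 \<le> x $ i then \<rho>/2 else - (\<rho>/2))"
        define z where "z = x + c *\<^sub>R axis i 1"
        have "dist x z = \<rho>/2" using that by (simp add: z_def c_def dist_norm)
        moreover have "\<rho>/2 \<le> \<bar>z $ i\<bar>" using that by (auto simp: z_def c_def axis_def)
        ultimately show ?thesis by auto
      qed
    qed (use i in \<open>auto simp: wA_def\<close>)
  next
    case False
    then obtain b where b: "w = wB b" "0 \<le> b" "\<alpha> = b" using weight by blast
    show ?thesis
    proof (rule that[of "norm"])
      show "norm z \<le> norm y + dist y z" for y z :: "real^'n"
        using norm_triangle_ineq[of y "z - y"] by (simp add: dist_norm norm_minus_commute)
      show "\<exists>z. dist x z \<le> \<rho>/2 \<and> \<rho>/2 \<le> norm z" if "0 < \<rho>" for x :: "real^'n" and \<rho>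
      proof (cases "x = 0")
        case True
        then show ?thesis using that
          by (intro exI[of _ "(\<rho>/2) *\<^sub>R axis undefined 1"]) auto
      next
        case False
        define z where "z = (1 + \<rho>/(2 * norm x)) *\<^sub>R x"
        have "z - x = (\<rho>/(2 * norm x)) *\<^sub>R x" by (simp add: z_def algebra_simps)
        then have "dist x z = norm ((\<rho>/(2 * norm x)) *\<^sub>R x)" by (metis dist_commute dist_norm)
        also have "\<dots> = \<rho>/2" using False that by simp
        finally have "dist x z = \<rho>/2" .
        moreover have "norm z = norm x + \<rho>/2" using False that
          by (simp add: z_def abs_of_nonneg field_simps)
        ultimately show ?thesis by auto
      qed
    qed (use b in \<open>auto simp: wB_def\<close>)
  qed
  have wm: "w \<in> borel_measurable borel" unfolding weq using gm by measurable
  define \<mu>1 where "\<mu>1 = measure lborel (ball (0::real^'n) 1)"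
  have \<mu>1: "0 < \<mu>1" unfolding \<mu>1_def using content_ball_pos[of 1 "0::real^'n"] by simp
  define c0 where "c0 = (1/4) powr \<alpha> * (1/4) ^ CARD('n) * \<mu>1"
  have c0: "0 < c0" using \<mu>1 by (simp add: c0_def)
  have "c0 * \<rho> powr (real CARD('n) + \<alpha>) \<le> wvol w (ball x \<rho>)" if \<rho>: "0 < \<rho>" for x \<rho>
  proof -
    have "c0 * \<rho> powr (real CARD('n) + \<alpha>) = (\<rho>/4) powr \<alpha> * ((\<rho>/4) ^ CARD('n) * \<mu>1)"
      using \<rho> by (simp add: c0_def powr_add powr_realpow powr_divide power_divide field_simps)
    also have "(\<rho>/4) ^ CARD('n) * \<mu>1 = measure lborel (ball (0::real^'n) (\<rho>/4))"
      using content_ball_conv_unit_ball[of "\<rho>/4" "0::real^'n"] \<rho> by (simp add: \<mu>1_def)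
    also have "(\<rho>/4) powr \<alpha> * \<dots> \<le> wvol w (ball x \<rho>)"
      unfolding weq by (rule vol_lower[OF gnn lip gm zpt al \<rho>])
    finally show ?thesis .
  qed
  then show ?thesis using al wm c0 weq gnn by (auto intro: rpow_nonneg)
qed



lemma nn_from_lint:
  fixes f :: "'a \<Rightarrow> real"
  assumes "(LINT x|M. f x) = 1" "\<And>x. 0 \<le> f x"
  shows "(\<integral>\<^sup>+ x. ennreal (f x) \<partial>M) = 1"
proof -
  have "integrable M f" using assms(1) not_integrable_integral_eq by fastforce
  then show ?thesis using assms by (subst nn_integral_eq_integral) auto
qed

lemma kernel_facts:
  fixes w :: "real^'n::finite \<Rightarrow> real"
  assumes K: "kernel_ok w cs Cs \<Gamma>" and cs: "0 < cs"
    and wnn: "\<And>x. 0 \<le> w x"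
    and c0: "0 < c0" and vol: "\<And>x \<rho>. 0 < \<rho> \<Longrightarrow> c0 * \<rho> powr (real CARD('n) + \<alpha>) \<le> wvol w (ball x \<rho>)"
    and t: "0 < t"
  shows "0 \<le> \<Gamma> x y t" "\<Gamma> x y t * (c0 * t powr ((real CARD('n) + \<alpha>)/2)) \<le> Cs"
    "(\<integral>\<^sup>+ y. ennreal (\<Gamma> x y t * w y) \<partial>lborel) = 1"
    "(\<integral>\<^sup>+ x. ennreal (\<Gamma> x y t * w x) \<partial>lborel) = 1"
proof -
  let ?V = "sqrt (wvol w (ball x (sqrt t)) * wvol w (ball y (sqrt t)))"
  have k3: "cs * exp (- (dist x y)\<^sup>2 / (cs * t)) \<le> ?V * \<Gamma> x y t"
     "?V * \<Gamma> x y t \<le> Cs * exp (- (dist x y)\<^sup>2 / (Cs * t))"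
    using K t unfolding kernel_ok_def by blast+
  have V0: "0 \<le> ?V" using measure_nonneg unfolding wvol_def by auto
  have pos: "0 < ?V * \<Gamma> x y t" using k3(1) cs by (smt (verit) exp_gt_zero mult_pos_pos)
  show g0: "0 \<le> \<Gamma> x y t"
  proof (rule ccontr)
    assume "\<not> 0 \<le> \<Gamma> x y t"
    then have "?V * \<Gamma> x y t \<le> 0" using V0 by (simp add: mult_nonneg_nonpos)
    then show False using pos by simp
  qed
  define T where "T = t powr ((real CARD('n) + \<alpha>)/2)"
  have T: "0 < T" using t by (simp add: T_def)
  have st: "sqrt t powr (real CARD('n) + \<alpha>) = T"
    using t by (simp add: T_def powr_powr powr_half_sqrt[symmetric])
  have vx: "c0 * T \<le> wvol w (ball x (sqrt t))" and vy: "c0 * T \<le> wvol w (ball y (sqrt t))"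
    using vol[of "sqrt t"] t st by auto
  have "c0 * T = sqrt ((c0 * T) * (c0 * T))" using c0 T by simp
  also have "\<dots> \<le> ?V" using vx vy c0 T
    by (intro real_sqrt_le_mono mult_mono) (auto simp: wvol_def)
  finally have "c0 * T * \<Gamma> x y t \<le> ?V * \<Gamma> x y t" using g0 by (intro mult_right_mono)
  also have "\<dots> \<le> Cs * exp (- (dist x y)\<^sup>2 / (Cs * t))" by (rule k3(2))
  also have "\<dots> \<le> Cs"
  proof -
    have "0 < Cs" using pos k3(2) by (smt (verit) exp_gt_zero mult_nonpos_nonneg)
    moreover have "exp (- (dist x y)\<^sup>2 / (Cs * t)) \<le> 1" using t calculation by simp
    ultimately show ?thesis by simp
  qed
  finally show "\<Gamma> x y t * (c0 * t powr ((real CARD('n) + \<alpha>)/2)) \<le> Cs" by (simp add: T_def mult_ac)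
  have "(LINT y|lborel. \<Gamma> x y t * w y) = 1" "(LINT x|lborel. \<Gamma> x y t * w x) = 1"
    using K t unfolding kernel_ok_def by blast+
  moreover have "\<And>x y. 0 \<le> \<Gamma> x y t"
  proof -
    fix x y
    let ?V = "sqrt (wvol w (ball x (sqrt t)) * wvol w (ball y (sqrt t)))"
    have k3: "cs * exp (- (dist x y)\<^sup>2 / (cs * t)) \<le> ?V * \<Gamma> x y t"
      using K t unfolding kernel_ok_def by blast
    have V0: "0 \<le> ?V" using measure_nonneg unfolding wvol_def by auto
    have pos: "0 < ?V * \<Gamma> x y t" using k3(1) cs by (smt (verit) exp_gt_zero mult_pos_pos)
    show "0 \<le> \<Gamma> x y t"
    proof (rule ccontr)
      assume "\<not> 0 \<le> \<Gamma> x y t"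
      then have "?V * \<Gamma> x y t \<le> 0" using V0 by (simp add: mult_nonneg_nonpos)
      then show False using pos by simp
    qed
  qed
  ultimately show "(\<integral>\<^sup>+ y. ennreal (\<Gamma> x y t * w y) \<partial>lborel) = 1"
    "(\<integral>\<^sup>+ x. ennreal (\<Gamma> x y t * w x) \<partial>lborel) = 1"
    using wnn by (auto intro!: nn_from_lint)
qed



lemma sets_wmeasure[simp, measurable_cong]: "sets (wmeasure w) = sets borel"
  by (simp add: wmeasure_def)

lemma distf_mono:
  assumes f: "f \<in> borel_measurable borel" and le: "lam \<le> l"
  shows "distf w f l \<le> distf w f lam"
  unfolding distf_def
proof (rule emeasure_mono)
  show "{x. l < \<bar>f x\<bar>} \<subseteq> {x. lam < \<bar>f x\<bar>}" using le by auto
  have "{x. lam < \<bar>f x\<bar>} \<in> sets borel" using f by measurable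
  then show "{x. lam < \<bar>f x\<bar>} \<in> sets (wmeasure w)" by simp
qed

lemma rearr_lower:
  assumes f: "f \<in> borel_measurable borel" and s: "ennreal s < distf w f l"
  shows "ennreal l \<le> rearr w f s"
  unfolding rearr_def
proof (rule INF_greatest)
  fix lam assume "lam \<in> {lam::real. 0 < lam \<and> distf w f lam \<le> ennreal s}"
  then have lam: "distf w f lam \<le> ennreal s" by auto
  have "l \<le> lam"
  proof (rule ccontr)
    assume "\<not> l \<le> lam"
    then have "distf w f l \<le> distf w f lam" by (intro distf_mono[OF f]) auto
    then show False using lam s by simp
  qed
  then show "ennreal l \<le> ennreal lam" by (rule ennreal_leI)
qed

lemma wlnorm_ge: "0 < s \<Longrightarrow> ennreal (s powr einv r) * rearr w f s \<le> wlnorm w r f"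
  unfolding wlnorm_def by (rule SUP_upper) auto

lemma ennreal_between:
  fixes a b :: ennreal
  assumes "a < b"
  obtains s where "a < ennreal s" "ennreal s < b" "0 \<le> s"
proof -
  obtain y where y: "a < y" "y < b" using dense[OF assms] by blast
  then have "y < top" using top.not_eq_extremum by fastforce
  then obtain s where "y = ennreal s" "0 \<le> s" by (cases y rule: ennreal_cases) auto
  then show ?thesis using y that by auto
qed

lemma dist_from_wl:
  assumes f: "f \<in> borel_measurable borel" and wl: "wlnorm w (ereal q) f \<le> ennreal m"
    and q: "0 < q" and m: "0 \<le> m" and l: "0 < l"
  shows "distf w f l \<le> ennreal ((m/l) powr q)"
proof (rule ccontr)
  assume "\<not> ?thesis"
  then have "ennreal ((m/l) powr q) < distf w f l" by simp
  then obtain s where s: "ennreal ((m/l) powr q) < ennreal s" "ennreal s < distf w f l" "0 \<le> s"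
    by (rule ennreal_between)
  have sq: "(m/l) powr q < s" using s(1) by (simp add: ennreal_less_iff)
  then have s0: "0 < s" by (smt (verit) powr_ge_zero)
  have "ennreal (s powr (1/q)) * ennreal l \<le> ennreal (s powr einv (ereal q)) * rearr w f s"
  proof -
    have e: "einv (ereal q) = 1/q" by (simp add: einv_def)
    show ?thesis unfolding e by (rule mult_left_mono[OF rearr_lower[OF f s(2)]]) auto
  qed
  also have "\<dots> \<le> ennreal m" using wlnorm_ge[OF s0] wl by (rule order.trans)
  finally have "s powr (1/q) * l \<le> m" using m l by (simp add: ennreal_mult[symmetric])
  then have "s powr (1/q) \<le> m / l" using l by (simp add: field_simps)
  then have "(s powr (1/q)) powr q \<le> (m/l) powr q" using q by (intro powr_mono2) auto
  then have "s \<le> (m/l) powr q" using q s0 by (simp add: powr_powr)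
  then show False using sq by simp
qed

lemma dist_from_wl_inf:
  assumes f: "f \<in> borel_measurable borel" and wl: "wlnorm w \<infinity> f \<le> ennreal m"
    and m: "0 \<le> m" and l: "m < l"
  shows "distf w f l = 0"
proof (rule ccontr)
  assume "\<not> ?thesis"
  then have "ennreal 0 < distf w f l" by (simp add: zero_less_iff_neq_zero)
  then obtain s where s: "ennreal 0 < ennreal s" "ennreal s < distf w f l" "0 \<le> s"
    by (rule ennreal_between)
  have s0: "0 < s" using s(1) by (simp add: ennreal_less_iff)
  have "ennreal l \<le> ennreal (s powr einv \<infinity>) * rearr w f s"
    using rearr_lower[OF f s(2)] s0 by (simp add: einv_def)
  also have "\<dots> \<le> ennreal m" using wlnorm_ge[OF s0] wl by (rule order.trans)
  finally show False using l m by (simp add: ennreal_le_iff)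
qed

lemma le_ennreal_dense:
  fixes x :: ennreal
  assumes "\<And>lam. b < lam \<Longrightarrow> x \<le> ennreal lam" and "0 \<le> b"
  shows "x \<le> ennreal b"
proof (rule ennreal_le_epsilon)
  fix e :: real assume "0 < e"
  then have "x \<le> ennreal (b + e)" using assms(1) by simp
  then show "x \<le> ennreal b + ennreal e" using assms(2) \<open>0 < e\<close> by (simp add: ennreal_plus)
qed

lemma wl_from_dist:
  assumes r: "0 < r" and B: "0 \<le> B"
    and d: "\<And>l. 0 < l \<Longrightarrow> distf w G l \<le> ennreal ((B/l) powr r)"
  shows "wlnorm w (ereal r) G \<le> ennreal B"
  unfolding wlnorm_def
proof (rule SUP_least)
  fix s :: real assume "s \<in> {0<..}"
  then have s: "0 < s" by simp
  define \<beta> where "\<beta> = B * s powr (-1/r)"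
  have \<beta>: "0 \<le> \<beta>" using B by (simp add: \<beta>_def)
  have "rearr w G s \<le> ennreal \<beta>"
  proof (rule le_ennreal_dense[OF _ \<beta>])
    fix lam assume lam: "\<beta> < lam"
    then have lam0: "0 < lam" using \<beta> by simp
    have "(B/lam) powr r \<le> s"
    proof (cases "B = 0")
      case True then show ?thesis using s by simp
    next
      case False
      have "B = B * s powr (-1/r) * s powr (1/r)"
        using s by (simp add: mult.assoc powr_add[symmetric])
      also have "\<dots> < lam * s powr (1/r)"
        using lam s by (intro mult_strict_right_mono) (auto simp: \<beta>_def)
      finally have "B < lam * s powr (1/r)" .
      then have "B/lam < s powr (1/r)" using lam0 by (simp add: field_simps)
      then have "(B/lam) powr r < (s powr (1/r)) powr r" using r B lam0 False
        by (intro powr_less_mono2) auto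
      then show ?thesis using s r by (simp add: powr_powr)
    qed
    then have "distf w G lam \<le> ennreal s" using d[OF lam0] by (meson ennreal_leI order.trans)
    then show "rearr w G s \<le> ennreal lam" unfolding rearr_def
      using lam0 by (intro INF_lower2[of lam]) auto
  qed
  moreover have e: "einv (ereal r) = 1/r" by (simp add: einv_def)
  ultimately have "ennreal (s powr einv (ereal r)) * rearr w G s \<le> ennreal (s powr (1/r)) * ennreal \<beta>"
    by (simp only: e) (rule mult_left_mono, auto)
  also have "\<dots> = ennreal B" using s B
    by (simp add: ennreal_mult[symmetric] \<beta>_def powr_add[symmetric] mult.left_commute)
  finally show "ennreal (s powr einv (ereal r)) * rearr w G s \<le> ennreal B" .
qed

lemma wl_from_dist_inf:
  assumes B: "0 \<le> B" and d: "\<And>l. B < l \<Longrightarrow> distf w G l = 0"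
  shows "wlnorm w \<infinity> G \<le> ennreal B"
  unfolding wlnorm_def
proof (rule SUP_least)
  fix s :: real assume "s \<in> {0<..}"
  then have s: "0 < s" by simp
  have "rearr w G s \<le> ennreal B"
  proof (rule le_ennreal_dense[OF _ B])
    fix lam assume lam: "B < lam"
    then show "rearr w G s \<le> ennreal lam" unfolding rearr_def
      using B d[OF lam] by (intro INF_lower2[of lam]) auto
  qed
  then show "ennreal (s powr einv \<infinity>) * rearr w G s \<le> ennreal B" using s by (simp add: einv_def)
qed



lemma dyadic:
  fixes A x :: real
  assumes A: "0 < A" and x: "A < x"
  shows "\<exists>j::nat. 2^j * A < x \<and> x \<le> 2^(Suc j) * A"
proof -
  obtain n :: nat where "x / A < 2 ^ n" using real_arch_pow[of 2 "x/A"] by auto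
  then have "x < 2^n * A" using A by (simp add: field_simps)
  moreover have "2^n * A \<le> 2^(Suc n) * A" using A by (intro mult_right_mono) auto
  ultimately have "x \<le> 2^(Suc n) * A" by linarith
  then have ex: "\<exists>j. x \<le> 2^(Suc j) * A" by blast
  define j where "j = (LEAST j. x \<le> 2^(Suc j) * A)"
  have j: "x \<le> 2^(Suc j) * A" unfolding j_def using ex by (rule LeastI_ex)
  have "2^j * A < x"
  proof (cases j)
    case 0 then show ?thesis using x by simp
  next
    case (Suc i)
    have "\<not> x \<le> 2^(Suc i) * A" using Suc unfolding j_def
      by (metis Suc_n_not_le_n not_less_Least j_def lessI)
    then show ?thesis using Suc by simp
  qed
  then show ?thesis using j by blast
qed

lemma term_id:
  fixes A M q :: real assumes A: "0 < A"
  shows "2^(Suc k) * A * (M/(2^k*A)) powr q = 2*A*(M/A) powr q * (2 powr (1-q))^k"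
proof -
  have "M/(2^k*A) = (M/A)/2^k" by simp
  then have "(M/(2^k*A)) powr q = (M/A) powr q / (2^k) powr q"
    by (simp only: powr_divide)
  also have "((2::real)^k) powr q = (2 powr real k) powr q" by (simp add: powr_realpow)
  also have "\<dots> = 2 powr (real k * q)" by (simp add: powr_powr)
  finally have e1: "(M/(2^k*A)) powr q = (M/A) powr q / 2 powr (real k * q)" .
  have e2: "(2 powr (1-q))^k = 2 powr (real k * (1-q))" by (simp add: powr_power)
  have e3: "(2::real)^(Suc k) = 2 * 2 powr real k" by (simp add: powr_realpow)
  show ?thesis unfolding e1 e2 e3
    by (simp add: right_diff_distrib powr_diff)
qed

lemma trunc_L1:
  fixes \<phi> w :: "real^'n::finite \<Rightarrow> real"
  assumes wm: "w \<in> borel_measurable borel" and f: "\<phi> \<in> borel_measurable borel"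
    and d: "\<And>l. 0 < l \<Longrightarrow> distf w \<phi> l \<le> ennreal ((M/l) powr q)"
    and q: "1 < q" and A: "0 < A"
  shows "(\<integral>\<^sup>+ y. ennreal (\<bar>\<phi> y\<bar> * indicator {y. A < \<bar>\<phi> y\<bar>} y) \<partial>wmeasure w)
     \<le> ennreal (A * (M/A) powr q * (2 / (1 - 2 powr (1-q))))"
proof -
  define S where "S k = {y. 2^k * A < \<bar>\<phi> y\<bar>}" for k :: nat
  have Sm: "S k \<in> sets (wmeasure w)" for k unfolding S_def using f by simp
  define \<rho> where "\<rho> = (2::real) powr (1-q)"
  have \<rho>: "0 < \<rho>" "\<rho> < 1" unfolding \<rho>_def using q by (auto intro: powr_less_one)
  define c where "c = 2*A*(M/A) powr q"
  have c: "0 \<le> c" using A by (simp add: c_def)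
  have pw: "ennreal (\<bar>\<phi> y\<bar> * indicator {y. A < \<bar>\<phi> y\<bar>} y) \<le> (\<Sum>k. ennreal (2^(Suc k) * A) * indicator (S k) y)" for y
  proof (cases "A < \<bar>\<phi> y\<bar>")
    case True
    then obtain j where j: "2^j * A < \<bar>\<phi> y\<bar>" "\<bar>\<phi> y\<bar> \<le> 2^(Suc j) * A" using dyadic[OF A] by blast
    have "ennreal (\<bar>\<phi> y\<bar> * indicator {y. A < \<bar>\<phi> y\<bar>} y) \<le> ennreal (2^(Suc j) * A) * indicator (S j) y"
      using True j by (simp add: S_def ennreal_leI del: power_Suc)
    also have "\<dots> \<le> (\<Sum>k. ennreal (2^(Suc k) * A) * indicator (S k) y)"
    proof -
      define g where "g k = ennreal (2^(Suc k) * A) * indicator (S k) y" for k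
      have "sum g {j} \<le> suminf g" by (rule sum_le_suminf[OF summableI]) auto
      then have "g j \<le> suminf g" by simp
      then show ?thesis unfolding g_def .
    qed
    finally show ?thesis .
  qed simp
  have "(\<integral>\<^sup>+ y. ennreal (\<bar>\<phi> y\<bar> * indicator {y. A < \<bar>\<phi> y\<bar>} y) \<partial>wmeasure w)
     \<le> (\<integral>\<^sup>+ y. (\<Sum>k. ennreal (2^(Suc k) * A) * indicator (S k) y) \<partial>wmeasure w)"
    by (intro nn_integral_mono pw)
  also have "\<dots> = (\<Sum>k. ennreal (2^(Suc k) * A) * emeasure (wmeasure w) (S k))"
    using Sm by (subst nn_integral_suminf) (auto simp: nn_integral_cmult_indicator)
  also have "\<dots> \<le> (\<Sum>k. ennreal (c * \<rho>^k))"
  proof (intro suminf_le summableI)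
    fix k
    have "emeasure (wmeasure w) (S k) = distf w \<phi> (2^k * A)" by (simp add: S_def distf_def)
    also have "\<dots> \<le> ennreal ((M/(2^k*A)) powr q)" using d[of "2^k*A"] A by simp
    finally have "ennreal (2^(Suc k) * A) * emeasure (wmeasure w) (S k)
        \<le> ennreal (2^(Suc k) * A) * ennreal ((M/(2^k*A)) powr q)" by (rule mult_left_mono) simp
    also have "\<dots> = ennreal (c * \<rho>^k)" using A
      by (simp add: ennreal_mult[symmetric] term_id c_def \<rho>_def del: power_Suc)
    finally show "ennreal (2^(Suc k) * A) * emeasure (wmeasure w) (S k) \<le> ennreal (c * \<rho>^k)" .
  qed
  also have "\<dots> = ennreal (\<Sum>k. c * \<rho>^k)"
    using \<rho> c by (intro suminf_ennreal2 summable_mult summable_geometric) auto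
  also have "(\<Sum>k. c * \<rho>^k) = c / (1 - \<rho>)"
    using \<rho> by (simp add: suminf_mult suminf_geometric summable_geometric)
  also have "c / (1 - \<rho>) = A * (M/A) powr q * (2 / (1 - 2 powr (1-q)))"
    by (simp add: c_def \<rho>_def)
  finally show ?thesis .
qed



locale opsetup =
  fixes w :: "real^'n::finite \<Rightarrow> real" and G :: "real^'n \<Rightarrow> real^'n \<Rightarrow> real" and K :: real
  assumes wnn: "\<And>x. 0 \<le> w x" and wm[measurable]: "w \<in> borel_measurable borel"
    and Gm: "(\<lambda>(x,y). G x y) \<in> borel_measurable borel"
    and Gnn: "\<And>x y. 0 \<le> G x y" and GK: "\<And>x y. G x y \<le> K"
    and G1: "\<And>x. (\<integral>\<^sup>+ y. ennreal (G x y * w y) \<partial>lborel) = 1"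
    and G2: "\<And>y. (\<integral>\<^sup>+ x. ennreal (G x y * w x) \<partial>lborel) = 1"
begin

lemma Gm2[measurable]: "(\<lambda>p. G (fst p) (snd p)) \<in> borel_measurable (lborel \<Otimes>\<^sub>M lborel)"
proof -
  have "(\<lambda>p. G (fst p) (snd p)) = (\<lambda>(x,y). G x y)" by auto
  then show ?thesis using Gm by (simp add: lborel_prod)
qed

lemma Gx[measurable]: "(\<lambda>y. G x y) \<in> borel_measurable borel"
proof -
  have "(\<lambda>y. (\<lambda>(x,y). G x y) (x, y)) \<in> borel_measurable borel"
    by (rule measurable_compose[OF _ Gm]) simp
  then show ?thesis by simp
qed

lemma Gy[measurable]: "(\<lambda>x. G x y) \<in> borel_measurable borel"
proof -
  have "(\<lambda>x. (\<lambda>(x,y). G x y) (x, y)) \<in> borel_measurable borel"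
    by (rule measurable_compose[OF _ Gm]) simp
  then show ?thesis by simp
qed

definition F :: "(real^'n \<Rightarrow> real) \<Rightarrow> real^'n \<Rightarrow> ennreal" where
  "F g x = (\<integral>\<^sup>+ y. ennreal (G x y * g y * w y) \<partial>lborel)"

lemma F_meas[measurable]:
  assumes [measurable]: "g \<in> borel_measurable borel"
  shows "F g \<in> borel_measurable borel"
proof -
  have "(\<lambda>x. \<integral>\<^sup>+ y. ennreal (G x y * g y * w y) \<partial>lborel) \<in> borel_measurable lborel"
    by (rule lborel.borel_measurable_nn_integral) measurable
  then show ?thesis unfolding F_def[abs_def] by simp
qed

lemma nn_W: "f \<in> borel_measurable borel \<Longrightarrow> integral\<^sup>N (wmeasure w) f = (\<integral>\<^sup>+ x. ennreal (w x) * f x \<partial>lborel)"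
  unfolding wmeasure_def by (subst nn_integral_density) auto

lemma Sop_le: "ennreal \<bar>Sop w (\<lambda>x y t. G x y) t \<phi> x\<bar> \<le> F (\<lambda>y. \<bar>\<phi> y\<bar>) x"
proof (cases "integrable lborel (\<lambda>y. G x y * \<phi> y * w y)")
  case True
  have "ennreal \<bar>Sop w (\<lambda>x y t. G x y) t \<phi> x\<bar> \<le> (\<integral>\<^sup>+ y. norm (G x y * \<phi> y * w y) \<partial>lborel)"
    unfolding Sop_def using integral_norm_bound_ennreal[OF True] by simp
  also have "\<dots> = F (\<lambda>y. \<bar>\<phi> y\<bar>) x" unfolding F_def
    using Gnn wnn by (intro nn_integral_cong) (simp add: abs_mult)
  finally show ?thesis .
next
  case False
  then show ?thesis unfolding Sop_def by (simp add: not_integrable_integral_eq)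
qed

lemma F_split:
  assumes [measurable]: "\<phi> \<in> borel_measurable borel" and A: "0 \<le> A"
  shows "F (\<lambda>y. \<bar>\<phi> y\<bar>) x \<le> F (\<lambda>y. \<bar>\<phi> y\<bar> * indicator {y. A < \<bar>\<phi> y\<bar>} y) x + ennreal A"
proof -
  have "F (\<lambda>y. \<bar>\<phi> y\<bar>) x \<le> (\<integral>\<^sup>+ y. ennreal (G x y * (\<bar>\<phi> y\<bar> * indicator {y. A < \<bar>\<phi> y\<bar>} y) * w y) + ennreal A * ennreal (G x y * w y) \<partial>lborel)"
    unfolding F_def
  proof (intro nn_integral_mono)
    fix y
    have h: "\<bar>\<phi> y\<bar> \<le> \<bar>\<phi> y\<bar> * indicator {y. A < \<bar>\<phi> y\<bar>} y + A" using A by (auto simp: indicator_def)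
    have "G x y * \<bar>\<phi> y\<bar> * w y \<le> G x y * (\<bar>\<phi> y\<bar> * indicator {y. A < \<bar>\<phi> y\<bar>} y + A) * w y"
      using Gnn[of x y] wnn[of y] h by (intro mult_right_mono mult_left_mono) auto
    then have "G x y * \<bar>\<phi> y\<bar> * w y \<le> G x y * (\<bar>\<phi> y\<bar> * indicator {y. A < \<bar>\<phi> y\<bar>} y) * w y + A * (G x y * w y)"
      by (simp add: algebra_simps)
    then show "ennreal (G x y * \<bar>\<phi> y\<bar> * w y) \<le> ennreal (G x y * (\<bar>\<phi> y\<bar> * indicator {y. A < \<bar>\<phi> y\<bar>} y) * w y) + ennreal A * ennreal (G x y * w y)"
      using A Gnn[of x y] wnn[of y] by (simp add: ennreal_mult[symmetric] ennreal_plus[symmetric] ennreal_leI del: ennreal_plus)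
  qed
  also have "\<dots> = F (\<lambda>y. \<bar>\<phi> y\<bar> * indicator {y. A < \<bar>\<phi> y\<bar>} y) x + ennreal A * (\<integral>\<^sup>+ y. ennreal (G x y * w y) \<partial>lborel)"
    unfolding F_def by (subst nn_integral_add) (auto simp: nn_integral_cmult)
  also have "\<dots> = F (\<lambda>y. \<bar>\<phi> y\<bar> * indicator {y. A < \<bar>\<phi> y\<bar>} y) x + ennreal A" using G1 by simp
  finally show ?thesis .
qed

lemma F_sup:
  assumes [measurable]: "g \<in> borel_measurable borel" and gnn: "\<And>y. 0 \<le> g y"
  shows "F g x \<le> ennreal K * integral\<^sup>N (wmeasure w) (\<lambda>y. ennreal (g y))"
proof -
  have "F g x \<le> (\<integral>\<^sup>+ y. ennreal K * (ennreal (w y) * ennreal (g y)) \<partial>lborel)"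
    unfolding F_def
  proof (intro nn_integral_mono)
    fix y
    have "G x y * g y * w y \<le> K * (w y * g y)"
      using GK[of x y] mult_right_mono[OF GK[of x y], of "w y * g y"] gnn[of y] wnn[of y]
      by (simp add: mult_ac)
    moreover have "0 \<le> K" using Gnn GK order.trans by blast
    ultimately show "ennreal (G x y * g y * w y) \<le> ennreal K * (ennreal (w y) * ennreal (g y))"
      using gnn[of y] wnn[of y] by (simp add: ennreal_mult[symmetric] ennreal_leI)
  qed
  also have "\<dots> = ennreal K * integral\<^sup>N (wmeasure w) (\<lambda>y. ennreal (g y))"
    by (simp add: nn_integral_cmult nn_W)
  finally show ?thesis .
qed

lemma F_int:
  assumes [measurable]: "g \<in> borel_measurable borel" and gnn: "\<And>y. 0 \<le> g y"
  shows "integral\<^sup>N (wmeasure w) (F g) = integral\<^sup>N (wmeasure w) (\<lambda>y. ennreal (g y))"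
proof -
  have "integral\<^sup>N (wmeasure w) (F g) = (\<integral>\<^sup>+ x. (\<integral>\<^sup>+ y. ennreal (G x y * w x) * ennreal (g y * w y) \<partial>lborel) \<partial>lborel)"
    unfolding nn_W[OF F_meas[OF assms(1)]] F_def
    by (subst nn_integral_cmult[symmetric]) (auto intro!: nn_integral_cong simp: ennreal_mult[symmetric] Gnn wnn gnn mult_ac)
  also have "\<dots> = (\<integral>\<^sup>+ y. (\<integral>\<^sup>+ x. ennreal (G x y * w x) * ennreal (g y * w y) \<partial>lborel) \<partial>lborel)"
    by (rule lborel_pair.Fubini'[symmetric]) measurable
  also have "\<dots> = (\<integral>\<^sup>+ y. ennreal (g y * w y) \<partial>lborel)"
    by (subst nn_integral_multc) (auto simp: G2)
  also have "\<dots> = integral\<^sup>N (wmeasure w) (\<lambda>y. ennreal (g y))"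
    by (simp add: nn_W ennreal_mult[symmetric] gnn wnn mult.commute)
  finally show ?thesis .
qed

end



context opsetup begin

lemma ennreal_cancel_le:
  fixes m :: ennreal
  assumes A: "0 < A" and h: "ennreal A * m \<le> ennreal (A * c)" and c: "0 \<le> c"
  shows "m \<le> ennreal c"
proof -
  have "m = ennreal (1/A) * (ennreal A * m)"
    using A by (simp add: mult.assoc[symmetric] ennreal_mult[symmetric])
  also have "\<dots> \<le> ennreal (1/A) * ennreal (A * c)" by (rule mult_left_mono[OF h]) simp
  also have "\<dots> = ennreal c" using A c by (simp add: ennreal_mult[symmetric])
  finally show ?thesis .
qed

lemma core:
  fixes \<phi> :: "real^'n \<Rightarrow> real"
  assumes f[measurable]: "\<phi> \<in> borel_measurable borel"
    and d: "\<And>l. 0 < l \<Longrightarrow> distf w \<phi> l \<le> ennreal ((M/l) powr q)"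
    and q: "1 < q" and M: "0 \<le> M" and l: "0 < l"
  shows "distf w (Sop w (\<lambda>x y t. G x y) t \<phi>) l = 0 \<or>
    (1 < K * (2 / (1 - 2 powr (1-q))) * (2*M/l) powr q \<and>
     distf w (Sop w (\<lambda>x y t. G x y) t \<phi>) l \<le> ennreal ((2 / (1 - 2 powr (1-q))) * (2*M/l) powr q))"
proof -
  define D where "D = 2 / (1 - 2 powr (1-q))"
  define X where "X = 2*M/l"
  define A where "A = l/2"
  have A: "0 < A" using l by (simp add: A_def)
  have MA: "M/A = X" by (simp add: A_def X_def)
  have D: "0 < D" unfolding D_def using q powr_less_one[of 2 "1-q"] by simp
  define \<phi>1 where "\<phi>1 y = \<bar>\<phi> y\<bar> * indicator {y. A < \<bar>\<phi> y\<bar>} y" for y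
  have \<phi>1m[measurable]: "\<phi>1 \<in> borel_measurable borel" unfolding \<phi>1_def by measurable
  have \<phi>1nn: "0 \<le> \<phi>1 y" for y by (simp add: \<phi>1_def)
  define L where "L = integral\<^sup>N (wmeasure w) (\<lambda>y. ennreal (\<phi>1 y))"
  have L: "L \<le> ennreal (A * X powr q * D)"
    unfolding L_def \<phi>1_def D_def MA[symmetric] by (rule trunc_L1[OF wm f d q A])
  define E1 where "E1 = {x. ennreal A < F \<phi>1 x}"
  have E1m: "E1 \<in> sets (wmeasure w)" unfolding E1_def by simp
  define S where "S = Sop w (\<lambda>x y t. G x y) t \<phi>"
  have sub: "{x. l < \<bar>S x\<bar>} \<subseteq> E1"
  proof
    fix x assume "x \<in> {x. l < \<bar>S x\<bar>}"
    then have "ennreal l < ennreal \<bar>S x\<bar>" using l by (simp add: ennreal_less_iff)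
    also have "\<dots> \<le> F (\<lambda>y. \<bar>\<phi> y\<bar>) x" unfolding S_def by (rule Sop_le)
    also have "\<dots> \<le> F \<phi>1 x + ennreal A" unfolding \<phi>1_def using A by (intro F_split) auto
    finally have lt: "ennreal l < F \<phi>1 x + ennreal A" .
    show "x \<in> E1"
    proof (rule ccontr)
      assume "x \<notin> E1"
      then have "F \<phi>1 x \<le> ennreal A" by (simp add: E1_def not_less)
      then have "F \<phi>1 x + ennreal A \<le> ennreal A + ennreal A" by (rule add_right_mono)
      also have "\<dots> = ennreal l" using A by (simp add: A_def ennreal_plus[symmetric] del: ennreal_plus)
      finally show False using lt by simp
    qed
  qed
  have dS: "distf w S l \<le> emeasure (wmeasure w) E1"
    unfolding distf_def by (rule emeasure_mono[OF sub E1m])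
  show ?thesis
  proof (cases "E1 = {}")
    case True
    then have "distf w S l \<le> 0" using dS by simp
    then show ?thesis unfolding S_def by (intro disjI1) simp
  next
    case False
    then obtain x0 where x0: "ennreal A < F \<phi>1 x0" unfolding E1_def by auto
    also have "F \<phi>1 x0 \<le> ennreal K * L" unfolding L_def by (rule F_sup[OF \<phi>1m \<phi>1nn])
    also have "\<dots> \<le> ennreal K * ennreal (A * X powr q * D)" by (rule mult_left_mono[OF L]) simp
    also have "\<dots> = ennreal (K * (A * X powr q * D))"
    proof -
      have K0: "0 \<le> K" using Gnn[of x0 x0] GK[of x0 x0] by linarith
      have c0: "0 \<le> A * X powr q * D" using A D by simp
      show ?thesis using ennreal_mult[OF K0 c0] by simp
    qed
    finally have "A < K * (A * X powr q * D)" using A by (simp add: ennreal_less_iff)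
    also have "K * (A * X powr q * D) = A * (K * D * X powr q)" by (simp only: mult_ac)
    finally have "A * 1 < A * (K * D * X powr q)" by simp
    then have c1: "1 < K * D * X powr q" using A by (simp only: mult_less_cancel_left_pos)
    have "ennreal A * emeasure (wmeasure w) E1 = integral\<^sup>N (wmeasure w) (\<lambda>x. ennreal A * indicator E1 x)"
      using E1m by (simp add: nn_integral_cmult_indicator)
    also have "\<dots> \<le> integral\<^sup>N (wmeasure w) (F \<phi>1)"
      by (intro nn_integral_mono) (auto simp: E1_def indicator_def less_imp_le)
    also have "\<dots> = L" unfolding L_def by (rule F_int[OF \<phi>1m \<phi>1nn])
    also have "\<dots> \<le> ennreal (A * (X powr q * D))" using L by (simp only: mult.assoc)
    finally have h: "ennreal A * emeasure (wmeasure w) E1 \<le> ennreal (A * (X powr q * D))" .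
    have "0 \<le> X powr q * D" using D by simp
    from ennreal_cancel_le[OF A h this] have "emeasure (wmeasure w) E1 \<le> ennreal (X powr q * D)" .
    also have "X powr q * D = D * X powr q" by (rule mult.commute)
    finally have "distf w S l \<le> ennreal (D * X powr q)" using dS by (rule order.trans[rotated])
    with c1 have "1 < K * D * X powr q \<and> distf w S l \<le> ennreal (D * X powr q)" by (rule conjI)
    then show ?thesis unfolding S_def D_def X_def by (rule disjI2)
  qed
qed

end



lemma alg_fin:
  fixes D K X q r :: real
  assumes D: "0 < D" and K: "0 < K" and X: "0 \<le> X" and q: "1 < q" and qr: "q \<le> r"
    and Y: "1 < K * D * X powr q"
  shows "D * X powr q \<le> (D powr (1/q) * K powr (1/q - 1/r) * X) powr r"
proof -
  have X0: "0 < X" using Y X by (cases "X = 0") auto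
  have e: "0 \<le> r/q - 1" using q qr by (simp add: field_simps)
  have "1 \<le> (K * D * X powr q) powr (r/q - 1)" using Y e by (intro ge_one_powr_ge_zero) auto
  then have "D * X powr q * 1 \<le> D * X powr q * (K * D * X powr q) powr (r/q - 1)"
    using D X0 by (intro mult_left_mono) auto
  also have "\<dots> = D powr (r/q) * K powr (r/q - 1) * X powr r"
  proof -
    have hD: "D powr (r/q) = D * D powr (r/q - 1)"
    proof -
      have "D powr (r/q) = D powr (1 + (r/q - 1))" by simp
      also have "\<dots> = D powr 1 * D powr (r/q - 1)" by (rule powr_add)
      finally show ?thesis using D by simp
    qed
    have hX: "X powr r = X powr q * (X powr q) powr (r/q - 1)"
    proof -
      have "X powr r = X powr (q + q * (r/q - 1))" using q by (simp add: field_simps)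
      also have "\<dots> = X powr q * X powr (q * (r/q - 1))" by (rule powr_add)
      finally show ?thesis by (simp add: powr_powr)
    qed
    show ?thesis unfolding hD hX using D K X0 by (simp add: powr_mult mult_ac)
  qed
  also have "\<dots> = (D powr (1/q) * K powr (1/q - 1/r) * X) powr r"
  proof -
    have ex: "(1/q - 1/r) * r = r/q - 1" "1/q * r = r/q" using q qr by (auto simp: field_simps)
    have "(D powr (1/q) * K powr (1/q - 1/r) * X) powr r = D powr (1/q * r) * K powr ((1/q - 1/r) * r) * X powr r"
      by (simp only: powr_mult powr_powr)
    then show ?thesis by (simp only: ex)
  qed
  finally show ?thesis by simp
qed

lemma alg_inf:
  fixes D K M l q :: real
  assumes D: "0 < D" and K: "0 < K" and M: "0 \<le> M" and q: "1 < q" and l: "0 < l"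
    and lB: "2 * D powr (1/q) * K powr (1/q) * M \<le> l"
  shows "\<not> 1 < K * D * (2*M/l) powr q"
proof (cases "M = 0")
  case True then show ?thesis by simp
next
  case False
  have P: "0 < D powr (1/q) * K powr (1/q)" using D K by simp
  have "2*M/l \<le> 1 / (D powr (1/q) * K powr (1/q))"
    using lB l P by (simp add: field_simps)
  then have "(2*M/l) powr q \<le> (1 / (D powr (1/q) * K powr (1/q))) powr q"
    using M l q by (intro powr_mono2) auto
  also have "\<dots> = 1 / (K * D)"
    using D K q by (simp add: powr_divide powr_mult powr_powr)
  finally have "K * D * (2*M/l) powr q \<le> K * D * (1 / (K * D))"
    using D K by (intro mult_left_mono) auto
  then show ?thesis using D K by simp
qed

lemma const_bound:
  fixes q e \<kappa> t \<gamma> m \<epsilon> :: real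
  assumes \<epsilon>: "0 < \<epsilon>" and q: "1 + \<epsilon> < q" and e: "0 \<le> e" "e \<le> 1"
    and \<kappa>: "0 < \<kappa>" and t: "0 < t" and m: "0 \<le> m"
  shows "2 * (2 / (1 - 2 powr (1-q))) powr (1/q) * (\<kappa> * t powr (-\<gamma>)) powr e * m
    \<le> (2 * (2 / (1 - 2 powr (-\<epsilon>))) * max 1 \<kappa>) * t powr (-\<gamma> * e) * m"
proof -
  define D where "D = 2 / (1 - 2 powr (1-q))"
  define D0 where "D0 = 2 / (1 - 2 powr (-\<epsilon>))"
  have p1: "2 powr (1-q) < 1" using q \<epsilon> by (intro powr_less_one) auto
  have p0: "2 powr (-\<epsilon>) < 1" using \<epsilon> by (intro powr_less_one) auto
  have "2 powr (1-q) \<le> 2 powr (-\<epsilon>)" using q by (intro powr_mono) auto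
  then have DD0: "D \<le> D0" unfolding D_def D0_def using p1 p0
    by (intro divide_left_mono) auto
  have D1: "1 \<le> D" unfolding D_def using p1 by (simp add: field_simps)
  have "D powr (1/q) \<le> D powr 1" using D1 q \<epsilon> by (intro powr_mono) auto
  then have Dq: "D powr (1/q) \<le> D0" using DD0 D1 by simp
  have ke: "\<kappa> powr e \<le> max 1 \<kappa>"
  proof (cases "1 \<le> \<kappa>")
    case True
    then have "\<kappa> powr e \<le> \<kappa> powr 1" using e by (intro powr_mono) auto
    then show ?thesis using \<kappa> by simp
  next
    case False
    then have "\<kappa> powr e \<le> 1" using \<kappa> e by (intro powr_le1) auto
    then show ?thesis by simp
  qed
  have "(\<kappa> * t powr (-\<gamma>)) powr e = \<kappa> powr e * t powr (-\<gamma> * e)"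
    using \<kappa> t by (simp add: powr_mult powr_powr)
  then have "2 * D powr (1/q) * (\<kappa> * t powr (-\<gamma>)) powr e * m = 2 * D powr (1/q) * \<kappa> powr e * (t powr (-\<gamma> * e) * m)"
    by (simp add: mult_ac)
  also have "\<dots> \<le> 2 * D0 * max 1 \<kappa> * (t powr (-\<gamma> * e) * m)"
    using Dq ke m D1 DD0 by (intro mult_right_mono mult_mono) auto
  finally show ?thesis unfolding D_def D0_def by (simp add: mult_ac)
qed



context opsetup begin

lemma K0: "0 \<le> K" using Gnn[of undefined undefined] GK[of undefined undefined] by linarith

lemma bound_fin:
  fixes \<phi> :: "real^'n \<Rightarrow> real"
  assumes f[measurable]: "\<phi> \<in> borel_measurable borel" and wl: "wlnorm w (ereal q) \<phi> \<le> ennreal m"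
    and m: "0 \<le> m" and q: "1 < q" and qr: "q \<le> r" and Kp: "0 < K"
  shows "wlnorm w (ereal r) (Sop w (\<lambda>x y t. G x y) t \<phi>)
    \<le> ennreal (2 * (2 / (1 - 2 powr (1-q))) powr (1/q) * K powr (1/q - 1/r) * m)"
proof -
  define D where "D = 2 / (1 - 2 powr (1-q))"
  have D: "0 < D" unfolding D_def using q powr_less_one[of 2 "1-q"] by simp
  have d: "\<And>l. 0 < l \<Longrightarrow> distf w \<phi> l \<le> ennreal ((m/l) powr q)"
    using dist_from_wl[OF f wl] q m by auto
  show ?thesis unfolding D_def[symmetric]
  proof (rule wl_from_dist)
    show "0 < r" using q qr by simp
    show "0 \<le> 2 * D powr (1/q) * K powr (1/q - 1/r) * m" using m by simp
    fix l :: real assume l: "0 < l"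
    have eq: "2 * D powr (1/q) * K powr (1/q - 1/r) * m / l = D powr (1/q) * K powr (1/q - 1/r) * (2*m/l)"
      by simp
    from core[OF f d q m l] show "distf w (Sop w (\<lambda>x y t. G x y) t \<phi>) l
        \<le> ennreal ((2 * D powr (1/q) * K powr (1/q - 1/r) * m / l) powr r)"
    proof
      assume "distf w (Sop w (\<lambda>x y t. G x y) t \<phi>) l = 0"
      then show ?thesis by simp
    next
      assume h: "1 < K * (2 / (1 - 2 powr (1-q))) * (2*m/l) powr q \<and>
         distf w (Sop w (\<lambda>x y t. G x y) t \<phi>) l \<le> ennreal ((2 / (1 - 2 powr (1-q))) * (2*m/l) powr q)"
      have "D * (2*m/l) powr q \<le> (D powr (1/q) * K powr (1/q - 1/r) * (2*m/l)) powr r"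
        using h m l by (intro alg_fin[OF D Kp _ q qr]) (auto simp: D_def)
      then have h1: "ennreal (D * (2*m/l) powr q) \<le> ennreal ((2 * D powr (1/q) * K powr (1/q - 1/r) * m / l) powr r)"
        unfolding eq by (rule ennreal_leI)
      have h2: "distf w (Sop w (\<lambda>x y t. G x y) t \<phi>) l \<le> ennreal (D * (2*m/l) powr q)"
        unfolding D_def using h by blast
      from h2 h1 show ?thesis by (rule order.trans)
    qed
  qed
qed

lemma bound_inf_r:
  fixes \<phi> :: "real^'n \<Rightarrow> real"
  assumes f[measurable]: "\<phi> \<in> borel_measurable borel" and wl: "wlnorm w (ereal q) \<phi> \<le> ennreal m"
    and m: "0 \<le> m" and q: "1 < q" and Kp: "0 < K"
  shows "wlnorm w \<infinity> (Sop w (\<lambda>x y t. G x y) t \<phi>)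
    \<le> ennreal (2 * (2 / (1 - 2 powr (1-q))) powr (1/q) * K powr (1/q) * m)"
proof -
  define D where "D = 2 / (1 - 2 powr (1-q))"
  have D: "0 < D" unfolding D_def using q powr_less_one[of 2 "1-q"] by simp
  have d: "\<And>l. 0 < l \<Longrightarrow> distf w \<phi> l \<le> ennreal ((m/l) powr q)"
    using dist_from_wl[OF f wl] q m by auto
  show ?thesis unfolding D_def[symmetric]
  proof (rule wl_from_dist_inf)
    show B0: "0 \<le> 2 * D powr (1/q) * K powr (1/q) * m" using m by simp
    fix l :: real assume lB: "2 * D powr (1/q) * K powr (1/q) * m < l"
    then have l: "0 < l" using B0 by linarith
    have nc: "\<not> 1 < K * D * (2*m/l) powr q" using lB by (intro alg_inf[OF D Kp m q l]) auto
    from core[OF f d q m l] nc show "distf w (Sop w (\<lambda>x y t. G x y) t \<phi>) l = 0"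
      by (auto simp: D_def)
  qed
qed

lemma bound_inf_q:
  fixes \<phi> :: "real^'n \<Rightarrow> real"
  assumes f[measurable]: "\<phi> \<in> borel_measurable borel" and wl: "wlnorm w \<infinity> \<phi> \<le> ennreal m"
    and m: "0 \<le> m"
  shows "wlnorm w \<infinity> (Sop w (\<lambda>x y t. G x y) t \<phi>) \<le> ennreal m"
proof (rule wl_from_dist_inf[OF m])
  have Sb: "\<bar>Sop w (\<lambda>x y t. G x y) t \<phi> x\<bar> \<le> m" for x
  proof (rule field_le_epsilon)
    fix e :: real assume e: "0 < e"
    define l where "l = m + e"
    have l: "m < l" "0 < l" using e m by (auto simp: l_def)
    have d0: "distf w \<phi> l = 0" by (rule dist_from_wl_inf[OF f wl m l(1)])
    define \<phi>1 where "\<phi>1 y = \<bar>\<phi> y\<bar> * indicator {y. l < \<bar>\<phi> y\<bar>} y" for y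
    have \<phi>1m[measurable]: "\<phi>1 \<in> borel_measurable borel" unfolding \<phi>1_def by measurable
    have \<phi>1nn: "0 \<le> \<phi>1 y" for y by (simp add: \<phi>1_def)
    have "integral\<^sup>N (wmeasure w) (\<lambda>y. ennreal (\<phi>1 y)) \<le> integral\<^sup>N (wmeasure w) (\<lambda>y. top * indicator {y. l < \<bar>\<phi> y\<bar>} y)"
      by (intro nn_integral_mono) (auto simp: \<phi>1_def indicator_def)
    also have "\<dots> = top * distf w \<phi> l"
      by (subst nn_integral_cmult_indicator) (auto simp: distf_def)
    also have "\<dots> = 0" using d0 by simp
    finally have I0: "integral\<^sup>N (wmeasure w) (\<lambda>y. ennreal (\<phi>1 y)) = 0" by simp
    have "ennreal \<bar>Sop w (\<lambda>x y t. G x y) t \<phi> x\<bar> \<le> F (\<lambda>y. \<bar>\<phi> y\<bar>) x" by (rule Sop_le)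
    also have "\<dots> \<le> F \<phi>1 x + ennreal l" unfolding \<phi>1_def using l by (intro F_split) auto
    also have "F \<phi>1 x \<le> ennreal K * 0" using F_sup[OF \<phi>1m \<phi>1nn, of x] I0 by simp
    finally have "ennreal \<bar>Sop w (\<lambda>x y t. G x y) t \<phi> x\<bar> \<le> ennreal l" by simp
    then show "\<bar>Sop w (\<lambda>x y t. G x y) t \<phi> x\<bar> \<le> m + e" using l by (simp add: l_def)
  qed
  fix l assume ml: "m < l"
  have "\<not> l < \<bar>Sop w (\<lambda>x y t. G x y) t \<phi> x\<bar>" for x using Sb[of x] ml by linarith
  then have "{x. l < \<bar>Sop w (\<lambda>x y t. G x y) t \<phi> x\<bar>} = {}" by blast
  then show "distf w (Sop w (\<lambda>x y t. G x y) t \<phi>) l = 0" by (simp add: distf_def)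
qed

end



lemma Sop_eq: "Sop w \<Gamma> t = Sop w (\<lambda>x y s. \<Gamma> x y t) t"
  by (simp add: Sop_def fun_eq_iff)

theorem lemma2p5:
  fixes w :: "real^'n::finite \<Rightarrow> real" and \<alpha> cs Cs :: real
  assumes weight: "(\<exists>i a. 0 \<le> a \<and> a < 1 \<and> w = wA i a \<and> \<alpha> = a) \<or>
                   (\<exists>b. 0 \<le> b \<and> b < real CARD('n) \<and> w = wB b \<and> \<alpha> = b)"
    and cs_pos: "0 < cs" and Cs_pos: "0 < Cs"
  shows "\<forall>\<epsilon>>0. \<exists>c2>0. \<forall>\<Gamma>. kernel_ok w cs Cs \<Gamma> \<longrightarrow>
           (\<forall>(q::ereal) (r::ereal) (\<phi>::real^'n \<Rightarrow> real) (t::real).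
              ereal (1 + \<epsilon>) < q \<longrightarrow> q \<le> r \<longrightarrow>
              \<phi> \<in> borel_measurable borel \<longrightarrow> wlnorm w q \<phi> < \<infinity> \<longrightarrow> 0 < t \<longrightarrow>
              wlnorm w r (Sop w \<Gamma> t \<phi>)
                \<le> ennreal (c2 * t powr (- ((real CARD('n) + \<alpha>) / 2) * (einv q - einv r)))
                   * wlnorm w q \<phi>)"
proof -
  from weight_props[OF weight] obtain c0 where al: "0 \<le> \<alpha>" and wnn: "\<And>x. 0 \<le> w x"
    and wm: "w \<in> borel_measurable borel" and c0: "0 < c0"
    and vol: "\<And>x \<rho>. 0 < \<rho> \<Longrightarrow> c0 * \<rho> powr (real CARD('n) + \<alpha>) \<le> wvol w (ball x \<rho>)"
    by blast
  define \<gamma> where "\<gamma> = (real CARD('n) + \<alpha>) / 2"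
  define \<kappa> where "\<kappa> = Cs / c0"
  have \<kappa>: "0 < \<kappa>" using Cs_pos c0 by (simp add: \<kappa>_def)
  show ?thesis
  proof (intro allI impI)
    fix \<epsilon> :: real assume \<epsilon>: "0 < \<epsilon>"
    define c2 where "c2 = 2 * (2 / (1 - 2 powr (-\<epsilon>))) * max 1 \<kappa>"
    have p0: "2 powr (-\<epsilon>) < 1" using \<epsilon> by (intro powr_less_one) auto
    have c2: "1 \<le> c2"
    proof -
      have "1 \<le> 2 / (1 - 2 powr (-\<epsilon>))" using p0 by (simp add: field_simps)
      moreover have "1 \<le> max 1 \<kappa>" by simp
      ultimately have "1 \<le> (2 / (1 - 2 powr (-\<epsilon>))) * max 1 \<kappa>" by (metis mult_mono' mult_1 zero_le_one order.trans)
      then show ?thesis unfolding c2_def by simp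
    qed
    show "\<exists>c2>0. \<forall>\<Gamma>. kernel_ok w cs Cs \<Gamma> \<longrightarrow>
           (\<forall>(q::ereal) (r::ereal) (\<phi>::real^'n \<Rightarrow> real) (t::real).
              ereal (1 + \<epsilon>) < q \<longrightarrow> q \<le> r \<longrightarrow>
              \<phi> \<in> borel_measurable borel \<longrightarrow> wlnorm w q \<phi> < \<infinity> \<longrightarrow> 0 < t \<longrightarrow>
              wlnorm w r (Sop w \<Gamma> t \<phi>)
                \<le> ennreal (c2 * t powr (- ((real CARD('n) + \<alpha>) / 2) * (einv q - einv r)))
                   * wlnorm w q \<phi>)"
    proof (intro exI[of _ c2] conjI allI impI)
      show "0 < c2" using c2 by simp
      fix \<Gamma> q r and \<phi> :: "real^'n \<Rightarrow> real" and t :: real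
      assume K: "kernel_ok w cs Cs \<Gamma>" and q: "ereal (1 + \<epsilon>) < q" and qr: "q \<le> r"
        and f: "\<phi> \<in> borel_measurable borel" and fin: "wlnorm w q \<phi> < \<infinity>" and t: "0 < t"
      define Kc where "Kc = \<kappa> * t powr (-\<gamma>)"
      have Kc: "0 < Kc" using \<kappa> t by (simp add: Kc_def)
      have GK: "\<Gamma> x y t \<le> Kc" for x y
      proof -
        have h: "\<Gamma> x y t * (c0 * t powr \<gamma>) \<le> Cs"
          using kernel_facts(2)[OF K cs_pos wnn c0 vol t] by (simp add: \<gamma>_def)
        have tp: "0 < c0 * t powr \<gamma>" using c0 t by simp
        have "\<Gamma> x y t \<le> Cs / (c0 * t powr \<gamma>)" using h tp by (simp add: field_simps)
        also have "\<dots> = Kc" using t by (simp add: Kc_def \<kappa>_def powr_minus divide_inverse)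
        finally show ?thesis .
      qed
      interpret opsetup w "\<lambda>x y. \<Gamma> x y t" Kc
      proof
        show "\<And>x. 0 \<le> w x" by (rule wnn)
        show "w \<in> borel_measurable borel" by (rule wm)
        show "(\<lambda>(x, y). \<Gamma> x y t) \<in> borel_measurable borel" using K t unfolding kernel_ok_def by blast
        show "\<And>x y. 0 \<le> \<Gamma> x y t" using kernel_facts(1)[OF K cs_pos wnn c0 vol t] by blast
        show "\<And>x y. \<Gamma> x y t \<le> Kc" by (rule GK)
        show "\<And>x. (\<integral>\<^sup>+ y. ennreal (\<Gamma> x y t * w y) \<partial>lborel) = 1"
          using kernel_facts(3)[OF K cs_pos wnn c0 vol t] by blast
        show "\<And>y. (\<integral>\<^sup>+ x. ennreal (\<Gamma> x y t * w x) \<partial>lborel) = 1"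
          using kernel_facts(4)[OF K cs_pos wnn c0 vol t] by blast
      qed
      obtain m where m: "wlnorm w q \<phi> = ennreal m" "0 \<le> m"
        using fin by (cases "wlnorm w q \<phi>" rule: ennreal_cases) auto
      have wl: "wlnorm w q \<phi> \<le> ennreal m" using m by simp
      have Seq: "Sop w \<Gamma> t \<phi> = Sop w (\<lambda>x y s. \<Gamma> x y t) t \<phi>" by (simp add: Sop_def fun_eq_iff)
      have rhs: "ennreal (c2 * t powr (- \<gamma> * e)) * wlnorm w q \<phi> = ennreal (c2 * t powr (- \<gamma> * e) * m)" for e
        using m c2 by (simp add: ennreal_mult)
      have main: "wlnorm w r (Sop w (\<lambda>x y s. \<Gamma> x y t) t \<phi>) \<le> ennreal (c2 * t powr (- \<gamma> * (einv q - einv r)) * m)"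
      proof (cases q)
        case PInf
        then have r: "r = \<infinity>" using qr by simp
        have "wlnorm w r (Sop w (\<lambda>x y s. \<Gamma> x y t) t \<phi>) \<le> ennreal m"
          unfolding r by (rule bound_inf_q[OF f _ m(2)]) (use wl PInf in simp)
        also have "\<dots> \<le> ennreal (c2 * t powr (- \<gamma> * (einv q - einv r)) * m)"
          using PInf r c2 m t by (auto intro!: ennreal_leI mult_le_cancel_right1[THEN iffD2] simp: einv_def)
        finally show "wlnorm w r (Sop w (\<lambda>x y s. \<Gamma> x y t) t \<phi>) \<le> ennreal (c2 * t powr (- \<gamma> * (einv q - einv r)) * m)" .
      next
        case MInf
        then show ?thesis using q by simp
      next
        case (real q')
        have q': "1 + \<epsilon> < q'" using q real by simp
        have q1: "1 < q'" using q' \<epsilon> by simp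
        have wl': "wlnorm w (ereal q') \<phi> \<le> ennreal m" using wl real by simp
        show ?thesis
        proof (cases r)
          case PInf
          have "wlnorm w r (Sop w (\<lambda>x y s. \<Gamma> x y t) t \<phi>)
              \<le> ennreal (2 * (2 / (1 - 2 powr (1-q'))) powr (1/q') * Kc powr (1/q') * m)"
            unfolding PInf by (rule bound_inf_r[OF f wl' m(2) q1 Kc])
          also have "\<dots> \<le> ennreal (c2 * t powr (- \<gamma> * (einv q - einv r)) * m)"
          proof -
            have ee: "einv q - einv r = 1/q'" using real PInf by (simp add: einv_def)
            have e: "0 \<le> 1/q'" "1/q' \<le> 1" using q1 by auto
            show ?thesis unfolding ee Kc_def c2_def
              by (rule ennreal_leI[OF const_bound[OF \<epsilon> q' e \<kappa> t m(2)]])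
          qed
          finally show ?thesis .
        next
          case MInf
          then show ?thesis using qr real by simp
        next
          case (real r')
          have qr': "q' \<le> r'" using qr real \<open>q = ereal q'\<close> by simp
          have "wlnorm w r (Sop w (\<lambda>x y s. \<Gamma> x y t) t \<phi>)
              \<le> ennreal (2 * (2 / (1 - 2 powr (1-q'))) powr (1/q') * Kc powr (1/q' - 1/r') * m)"
            unfolding real by (rule bound_fin[OF f wl' m(2) q1 qr' Kc])
          also have "\<dots> \<le> ennreal (c2 * t powr (- \<gamma> * (einv q - einv r)) * m)"
          proof -
            have a1: "1/q' \<le> 1" "0 \<le> 1/r'" "1/r' \<le> 1/q'" using q1 qr' by (auto simp: field_simps)
            then have e: "0 \<le> 1/q' - 1/r'" "1/q' - 1/r' \<le> 1" by linarith+
            have ee: "einv q - einv r = 1/q' - 1/r'" using real \<open>q = ereal q'\<close> by (simp add: einv_def)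
            show ?thesis unfolding ee Kc_def c2_def
              by (rule ennreal_leI[OF const_bound[OF \<epsilon> q' e \<kappa> t m(2)]])
          qed
          finally show ?thesis .
        qed
      qed
      show "wlnorm w r (Sop w \<Gamma> t \<phi>)
                \<le> ennreal (c2 * t powr (- ((real CARD('n) + \<alpha>) / 2) * (einv q - einv r)))
                   * wlnorm w q \<phi>"
        unfolding \<gamma>_def[symmetric] rhs Seq by (rule main)
    qed
  qed
qed


end
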